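(* Let $\pi$ be uniform on $\mathrm{PF}_n$ and let $R(\pi)=\#\{1\le i\le n-1:\pi_i=\pi_{i+1}\}$ be the number of repeats. Then for each fixed integer $j\ge0$, $P(R(\pi)=j)\to \frac{1}{e\,j!}$ as $n\to\infty$.
   Context: A parking function of length $n$ is a sequence $(\pi_1,\dots,\pi_n)$ with $1\le\pi_i\le n$ such that $\#\{t:\pi_t\le i\}\ge i$ for all $1\le i\le n$; $\mathrm{PF}_n$ denotes the set of these. *)

theory Defs
  imports "HOL-Analysis.Analysis"
begin

text \<open>Parking functions of length n, as lists p with p!(t-1) = pi_t.\<close>
definition parking_functions :: "nat \<Rightarrow> nat list set" where
  "parking_functions n = {p. length p = n \<and> (\<forall>t<n. 1 \<le> p ! t \<and> p ! t \<le> n) \<and>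
      (\<forall>i\<in>{1..n}. card {t. t < n \<and> p ! t \<le> i} \<ge> i)}"

definition repeats :: "nat list \<Rightarrow> nat" where
  "repeats p = card {i. 1 \<le> i \<and> i \<le> length p - 1 \<and> p ! (i - 1) = p ! i}"

end

theory Submission
  imports Defs "HOL-Real_Asymp.Real_Asymp"
begin


lemma repeats_alt: "repeats p = card {i. Suc i < length p \<and> p ! i = p ! Suc i}"
proof -
  have "{i. 1 \<le> i \<and> i \<le> length p - 1 \<and> p ! (i - 1) = p ! i} = Suc ` {i. Suc i < length p \<and> p ! i = p ! Suc i}"
  proof (rule set_eqI, rule iffI)
    fix x assume "x \<in> {i. 1 \<le> i \<and> i \<le> length p - 1 \<and> p ! (i - 1) = p ! i}"
    then have "x = Suc (x - 1)" "x - 1 \<in> {i. Suc i < length p \<and> p ! i = p ! Suc i}" by auto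
    then show "x \<in> Suc ` {i. Suc i < length p \<and> p ! i = p ! Suc i}" by blast
  qed auto
  then show ?thesis unfolding repeats_def by (simp add: card_image)
qed

lemma repeats_Nil[simp]: "repeats [] = 0" by (simp add: repeats_alt)
lemma repeats_single[simp]: "repeats [x] = 0" by (simp add: repeats_alt)
lemma repeats_Cons2: "repeats (x#y#xs) = (if x = y then 1 else 0) + repeats (y#xs)"
proof -
  let ?S = "{i. Suc i < length (y#xs) \<and> (y#xs) ! i = (y#xs) ! Suc i}"
  have "{i. Suc i < length (x#y#xs) \<and> (x#y#xs) ! i = (x#y#xs) ! Suc i}
     = (if x = y then {0} else {}) \<union> Suc ` ?S"
  proof (rule set_eqI, rule iffI)
    fix i assume i: "i \<in> {i. Suc i < length (x#y#xs) \<and> (x#y#xs) ! i = (x#y#xs) ! Suc i}"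
    show "i \<in> (if x = y then {0} else {}) \<union> Suc ` ?S"
    proof (cases i)
      case 0 then show ?thesis using i by auto
    next
      case (Suc k) then have "k \<in> ?S" using i by auto
      then show ?thesis using Suc by blast
    qed
  qed (auto split: if_splits)
  then show ?thesis unfolding repeats_alt by (simp add: card_image card_insert_if)
qed



definition V :: "nat set \<Rightarrow> nat \<Rightarrow> nat \<Rightarrow> nat \<Rightarrow> nat list set" where
  "V X a L j = {t. length t = L \<and> set t \<subseteq> X \<and> repeats (a#t) = j}"

lemma V_0: "V X a 0 j = (if j = 0 then {[]} else {})"
  by (auto simp: V_def)

lemma V_Suc: "V X a (Suc L) j = (\<Union>b\<in>X-{a}. Cons b ` V X b L j) \<union> (if j = 0 \<or> a \<notin> X then {} else Cons a ` V X a L (j-1))"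
proof (rule set_eqI, rule iffI)
  fix t assume t: "t \<in> V X a (Suc L) j"
  then obtain b u where tb: "t = b # u" by (cases t) (auto simp: V_def)
  show "t \<in> (\<Union>b\<in>X-{a}. Cons b ` V X b L j) \<union> (if j = 0 \<or> a \<notin> X then {} else Cons a ` V X a L (j-1))"
  proof (cases "b = a")
    case True
    then show ?thesis using t tb by (auto simp: V_def repeats_Cons2)
  next
    case False
    then show ?thesis using t tb by (auto simp: V_def repeats_Cons2)
  qed
qed (auto simp: V_def repeats_Cons2 split: if_splits)

lemma finite_V: "finite X \<Longrightarrow> finite (V X a L j)"
proof -
  assume "finite X"
  then have "finite {t. set t \<subseteq> X \<and> length t = L}" by (rule finite_lists_length_eq)
  then show ?thesis by (rule rev_finite_subset) (auto simp: V_def)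
qed

lemma card_V: "finite X \<Longrightarrow> a \<in> X \<Longrightarrow> card (V X a L j) = (L choose j) * (card X - 1) ^ (L - j)"
proof (induction L arbitrary: a j)
  case 0
  then show ?case by (simp add: V_0)
next
  case (Suc L)
  let ?K = "card X - 1"
  have A: "card (\<Union>b\<in>X-{a}. Cons b ` V X b L j) = (\<Sum>b\<in>X-{a}. card (Cons b ` V X b L j))"
    by (rule card_UN_disjoint) (use Suc.prems finite_V in auto)
  also have "\<dots> = (\<Sum>b\<in>X-{a}. (L choose j) * ?K ^ (L - j))"
    by (rule sum.cong) (auto simp: card_image Suc.IH Suc.prems)
  also have "\<dots> = ?K * ((L choose j) * ?K ^ (L - j))"
    using Suc.prems by (simp add: card_Diff_singleton)
  finally have A: "card (\<Union>b\<in>X-{a}. Cons b ` V X b L j) = ?K * ((L choose j) * ?K ^ (L - j))" .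
  show ?case
  proof (cases "j = 0")
    case True
    then show ?thesis using A by (simp add: V_Suc Suc.prems)
  next
    case False
    have B: "card (Cons a ` V X a L (j-1)) = (L choose (j-1)) * ?K ^ (L - (j-1))"
      by (simp add: card_image Suc.IH Suc.prems)
    have "card (V X a (Suc L) j) = card (\<Union>b\<in>X-{a}. Cons b ` V X b L j) + card (Cons a ` V X a L (j-1))"
      unfolding V_Suc using False Suc.prems
      by (simp, intro card_Un_disjoint) (auto intro: finite_V)
    also have "\<dots> = (Suc L choose j) * ?K ^ (Suc L - j)"
    proof -
      obtain j' where j': "j = Suc j'" using False by (cases j) auto
      show ?thesis
      proof (cases "j' < L")
        case True
        then have "?K * ((L choose j) * ?K ^ (L - j)) = (L choose j) * ?K ^ (Suc L - j)"
        proof -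
          have "L - j' = Suc (L - Suc j')" using True by simp
          then show ?thesis using j' by simp
        qed
        then show ?thesis using A B j' True by (simp add: Suc_diff_le algebra_simps)
      next
        case False
        then show ?thesis using A B j' by (cases "j' = L") (auto simp: binomial_eq_0)
      qed
    qed
    finally show ?thesis .
  qed
qed

lemma card_lists_rep:
  assumes "finite X" "n \<ge> 1"
  shows "card {s. length s = n \<and> set s \<subseteq> X \<and> repeats s = j} = card X * ((n - 1) choose j) * (card X - 1) ^ (n - 1 - j)"
proof -
  obtain m where n: "n = Suc m" using assms by (cases n) auto
  have "{s. length s = n \<and> set s \<subseteq> X \<and> repeats s = j} = (\<Union>a\<in>X. Cons a ` V X a m j)"
  proof (rule set_eqI, rule iffI)
    fix s assume "s \<in> {s. length s = n \<and> set s \<subseteq> X \<and> repeats s = j}"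
    then show "s \<in> (\<Union>a\<in>X. Cons a ` V X a m j)" using n by (cases s) (auto simp: V_def)
  qed (auto simp: V_def n)
  then have "card {s. length s = n \<and> set s \<subseteq> X \<and> repeats s = j} = (\<Sum>a\<in>X. card (Cons a ` V X a m j))"
    by (simp, intro card_UN_disjoint) (use assms finite_V in auto)
  also have "\<dots> = (\<Sum>a\<in>X. (m choose j) * (card X - 1) ^ (m - j))"
    by (rule sum.cong) (auto simp: card_image card_V assms)
  finally show ?thesis by (simp add: n)
qed



definition sh :: "nat \<Rightarrow> nat \<Rightarrow> nat list \<Rightarrow> nat list" where
  "sh N c s = map (\<lambda>v. (v - 1 + c) mod N + 1) s"

lemma length_sh[simp]: "length (sh N c s) = length s" by (simp add: sh_def)

lemma set_sh: "N > 0 \<Longrightarrow> set (sh N c s) \<subseteq> {1..N}"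
  by (auto simp: sh_def Suc_leI)

lemma sh_sh: "sh N a (sh N b s) = sh N (b + a) s"
  by (simp add: sh_def mod_add_left_eq add.assoc)

lemma mod2N: "(z::nat) < 2 * N \<Longrightarrow> z mod N = (if z < N then z else z - N)"
  by (simp add: le_mod_geq)

lemma mod_inj_aux: "(x::nat) < N \<Longrightarrow> y < N \<Longrightarrow> (x + c) mod N = (y + c) mod N \<Longrightarrow> x = y"
proof -
  assume a: "x < N" "y < N" "(x + c) mod N = (y + c) mod N"
  have "(x+c) mod N = (x + c mod N) mod N" "(y+c) mod N = (y + c mod N) mod N" by (simp_all add: mod_add_right_eq)
  moreover have "c mod N < N" using a by simp
  ultimately show "x = y" using a mod2N[of "x + c mod N" N] mod2N[of "y + c mod N" N] by (auto split: if_splits)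
qed

lemma sh_pt: "(v::nat) \<in> {1..N} \<Longrightarrow> (v - 1) mod N + 1 = v"
proof -
  assume "v \<in> {1..N}" then have "v - 1 < N" "v \<ge> 1" by auto
  then show ?thesis by simp
qed


lemma sh_N: "set s \<subseteq> {1..N} \<Longrightarrow> sh N N s = s"
proof -
  assume "set s \<subseteq> {1..N}"
  then have "\<forall>v\<in>set s. (v - 1 + N) mod N + 1 = v" using sh_pt by auto
  then show ?thesis unfolding sh_def by (induction s) auto
qed

lemma sh_0: "set s \<subseteq> {1..N} \<Longrightarrow> sh N 0 s = s"
proof -
  assume "set s \<subseteq> {1..N}"
  then have "\<forall>v\<in>set s. (v - 1) mod N + 1 = v" using sh_pt by (metis subsetD)
  then show ?thesis unfolding sh_def by (induction s) auto
qed

lemma sh_mod: "sh N (c mod N) s = sh N c s"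
  by (simp add: sh_def mod_add_right_eq)

lemma repeats_sh: "set s \<subseteq> {1..N} \<Longrightarrow> repeats (sh N c s) = repeats s"
proof -
  assume S: "set s \<subseteq> {1..N}"
  have "\<And>i. Suc i < length s \<Longrightarrow> (sh N c s ! i = sh N c s ! Suc i) = (s ! i = s ! Suc i)"
  proof -
    fix i assume i: "Suc i < length s"
    then have a: "s ! i \<in> {1..N}" "s ! Suc i \<in> {1..N}" using S nth_mem[of i s] nth_mem[of "Suc i" s] by (auto simp del: atLeastAtMost_iff)
    have e: "(sh N c s ! i = sh N c s ! Suc i) \<longleftrightarrow> (s ! i - 1 + c) mod N = (s ! Suc i - 1 + c) mod N"
      using i by (simp add: sh_def)
    show "(sh N c s ! i = sh N c s ! Suc i) = (s ! i = s ! Suc i)"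
    proof (cases "s ! i = s ! Suc i")
      case True then show ?thesis using e by simp
    next
      case False
      then have "s ! i - 1 \<noteq> s ! Suc i - 1" using a by auto
      moreover have "s ! i - 1 < N" "s ! Suc i - 1 < N" using a by auto
      ultimately have "(s ! i - 1 + c) mod N \<noteq> (s ! Suc i - 1 + c) mod N"
        using mod_inj_aux[of "s ! i - 1" N "s ! Suc i - 1" c] by blast
      then show ?thesis using e False by blast
    qed
  qed
  then show ?thesis unfolding repeats_alt by (metis (no_types, lifting) length_sh)
qed



lemma cycle:
  fixes Q :: "nat \<Rightarrow> int"
  assumes N: "N > 0" and per: "\<And>i. Q (i + N) = Q i - 1"
  shows "\<exists>!r. r < N \<and> (\<forall>i. 1 \<le> i \<and> i < N \<longrightarrow> Q r \<le> Q (r+i))"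
proof (rule ex_ex1I)
  define m where "m = Min (Q ` {..<N})"
  have fin: "finite (Q ` {..<N})" and ne: "Q ` {..<N} \<noteq> {}" using N by auto
  have mle: "\<And>k. k < N \<Longrightarrow> m \<le> Q k" unfolding m_def using fin by auto
  have "m \<in> Q ` {..<N}" unfolding m_def using fin ne by (rule Min_in)
  then obtain r0 where r0: "r0 < N" "Q r0 = m" by auto
  define r where "r = (LEAST r. r < N \<and> Q r = m)"
  have r: "r < N" "Q r = m" using LeastI[of "\<lambda>r. r < N \<and> Q r = m", OF conjI[OF r0]] unfolding r_def by auto
  have rl: "\<And>q. q < r \<Longrightarrow> Q q \<noteq> m"
    using not_less_Least[of _ "\<lambda>r. r < N \<and> Q r = m"] r unfolding r_def by (metis less_trans)
  show "\<exists>r. r < N \<and> (\<forall>i. 1 \<le> i \<and> i < N \<longrightarrow> Q r \<le> Q (r+i))"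
  proof (intro exI conjI allI impI)
    show "r < N" by (rule r)
    fix i assume i: "1 \<le> i \<and> i < N"
    show "Q r \<le> Q (r+i)"
    proof (cases "r + i < N")
      case True then show ?thesis using mle r by auto
    next
      case False
      define q where "q = r + i - N"
      have q: "q < r" "r + i = q + N" using i False unfolding q_def by auto
      have "Q q \<noteq> m" using rl q by auto
      moreover have "m \<le> Q q" using mle q r by auto
      ultimately show ?thesis using q per r by auto
    qed
  qed
next
  fix r r'
  assume A: "r < N \<and> (\<forall>i. 1 \<le> i \<and> i < N \<longrightarrow> Q r \<le> Q (r+i))"
     and B: "r' < N \<and> (\<forall>i. 1 \<le> i \<and> i < N \<longrightarrow> Q r' \<le> Q (r'+i))"
  have *: "False" if a: "a < N \<and> (\<forall>i. 1 \<le> i \<and> i < N \<longrightarrow> Q a \<le> Q (a+i))"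
     and b: "b < N \<and> (\<forall>i. 1 \<le> i \<and> i < N \<longrightarrow> Q b \<le> Q (b+i))" and ab: "a < b" for a b
  proof -
    have "1 \<le> b - a" "b - a < N" using ab b by auto
    then have "Q a \<le> Q (a + (b - a))" using a by blast
    then have 1: "Q a \<le> Q b" using ab by simp
    have "1 \<le> N - (b - a)" "N - (b - a) < N" using ab b by auto
    then have "Q b \<le> Q (b + (N - (b - a)))" using b by blast
    moreover have "b + (N - (b - a)) = a + N" using ab b by auto
    ultimately have "Q b \<le> Q (a + N)" by (metis add.commute)
    then have "Q b \<le> Q a - 1" using per[of a] by simp
    with 1 show False by simp
  qed
  show "r = r'" using *[OF A B] *[OF B A] by (cases "r < r'"; cases "r' < r") auto
qed

lemma fin_lt: "finite {t::nat. t < n \<and> P t}"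
  by (rule finite_subset[of _ "{..<n}"]) auto

lemma card_lt_sum:
  "card {t. t < (n::nat) \<and> f t < i} = (\<Sum>k<i. card {t. t < n \<and> f t = (k::nat)})"
proof (induction i)
  case 0 then show ?case by simp
next
  case (Suc i)
  have e: "{t. t < n \<and> f t < Suc i} = {t. t < n \<and> f t < i} \<union> {t. t < n \<and> f t = i}" by auto
  have "card ({t. t < n \<and> f t < i} \<union> {t. t < n \<and> f t = i}) = card {t. t < n \<and> f t < i} + card {t. t < n \<and> f t = i}"
    by (rule card_Un_disjoint) (auto simp: fin_lt)
  then have "card {t. t < n \<and> f t < Suc i} = card {t. t < n \<and> f t < i} + card {t. t < n \<and> f t = i}"
    by (simp only: e)
  then show ?case using Suc by simp
qed

lemma PF_char:
  assumes "length s = n" "set s \<subseteq> {1..Suc n}"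
  shows "s \<in> parking_functions n \<longleftrightarrow> (\<forall>i\<in>{1..n}. i \<le> card {t. t < n \<and> s ! t \<le> i})"
proof
  assume "s \<in> parking_functions n" then show "\<forall>i\<in>{1..n}. i \<le> card {t. t < n \<and> s ! t \<le> i}"
    by (simp add: parking_functions_def)
next
  assume H: "\<forall>i\<in>{1..n}. i \<le> card {t. t < n \<and> s ! t \<le> i}"
  have ent: "\<And>t. t < n \<Longrightarrow> 1 \<le> s ! t \<and> s ! t \<le> Suc n" using assms nth_mem by fastforce
  have "\<forall>t<n. s ! t \<le> n"
  proof (cases "n = 0")
    case True then show ?thesis by simp
  next
    case False
    then have "n \<le> card {t. t < n \<and> s ! t \<le> n}" using H by auto
    moreover have sub: "{t. t < n \<and> s ! t \<le> n} \<subseteq> {..<n}" by auto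
    ultimately have "{t. t < n \<and> s ! t \<le> n} = {..<n}"
      by (metis card_lessThan card_seteq finite_lessThan)
    then show ?thesis by auto
  qed
  then show "s \<in> parking_functions n" using H ent assms(1) by (simp add: parking_functions_def)
qed

lemma mod_char:
  assumes "(x::nat) < N" "k < N" "c < N"
  shows "(x + c) mod N = k \<longleftrightarrow> x = (k + (N - c) mod N) mod N"
proof
  have e: "((k + (N - c) mod N) mod N + c) mod N = k"
  proof -
    have "((k + (N - c) mod N) mod N + c) mod N = (k + (N - c) + c) mod N"
      by (simp add: mod_add_left_eq mod_add_right_eq)
    also have "\<dots> = (k + N) mod N" using assms by simp
    finally show ?thesis using assms by simp
  qed
  show "x = (k + (N - c) mod N) mod N" if "(x + c) mod N = k"
  proof -
    have "(k + (N - c) mod N) mod N < N" using assms by simp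
    from mod_inj_aux[OF assms(1) this, of c] that e show ?thesis by simp
  qed
  show "(x + c) mod N = k" if "x = (k + (N - c) mod N) mod N" unfolding that by (rule e)
qed

lemma sum_split_shift: "(\<Sum>k<r+i. M k) = (\<Sum>k<r. M k) + (\<Sum>k<i. M (k + r :: nat))"
  by (induction i) (simp_all add: algebra_simps)

lemma neg_mod_inv: "(c::nat) < N \<Longrightarrow> (N - (N - c) mod N) mod N = c"
proof (cases "c = 0")
  case False
  assume c: "c < N"
  then have "(N - c) mod N = N - c" using False by simp
  then show ?thesis using c by simp
qed simp



locale seq =
  fixes n :: nat and s :: "nat list"
  assumes len: "length s = n" and rng: "set s \<subseteq> {1..Suc n}"
begin

definition M :: "nat \<Rightarrow> nat" where "M k = card {t. t < n \<and> s ! t - 1 = k mod Suc n}"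
definition Q :: "nat \<Rightarrow> int" where "Q j = int (\<Sum>k<j. M k) - int j"

lemma ent: "t < n \<Longrightarrow> 1 \<le> s ! t \<and> s ! t \<le> Suc n"
proof -
  assume "t < n"
  then have "s ! t \<in> set s" by (simp add: len)
  then have "s ! t \<in> {1..Suc n}" using rng by blast
  then show ?thesis by simp
qed

lemma E1:
  assumes c: "c < Suc n" and i: "i \<le> n"
  shows "card {t. t < n \<and> sh (Suc n) c s ! t \<le> i} = (\<Sum>k<i. M (k + (Suc n - c) mod Suc n))"
proof -
  let ?N = "Suc n"
  have "{t. t < n \<and> sh ?N c s ! t \<le> i} = {t. t < n \<and> (s ! t - 1 + c) mod ?N < i}"
    using len by (auto simp: sh_def)
  then have "card {t. t < n \<and> sh ?N c s ! t \<le> i} = (\<Sum>k<i. card {t. t < n \<and> (s ! t - 1 + c) mod ?N = k})"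
    by (simp add: card_lt_sum)
  also have "\<dots> = (\<Sum>k<i. M (k + (Suc n - c) mod Suc n))"
  proof (rule sum.cong)
    fix k assume k: "k \<in> {..<i}"
    have "{t. t < n \<and> (s ! t - 1 + c) mod ?N = k} = {t. t < n \<and> s ! t - 1 = (k + (?N - c) mod ?N) mod ?N}"
    proof (rule Collect_cong)
      fix t
      show "(t < n \<and> (s ! t - 1 + c) mod ?N = k) = (t < n \<and> s ! t - 1 = (k + (?N - c) mod ?N) mod ?N)"
      proof (cases "t < n")
        case True
        then have "s ! t - 1 < ?N" using ent by fastforce
        moreover have "k < ?N" using k i by auto
        ultimately show ?thesis using mod_char[of "s ! t - 1" ?N k c] c True by simp
      qed simp
    qed
    then show "card {t. t < n \<and> (s ! t - 1 + c) mod ?N = k} = M (k + (Suc n - c) mod Suc n)"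
      unfolding M_def by simp
  qed simp
  finally show ?thesis .
qed

lemma E2: "(\<Sum>k<Suc n. M k) = n"
proof -
  have "card {t. t < n \<and> s ! t - 1 < Suc n} = (\<Sum>k<Suc n. card {t. t < n \<and> s ! t - 1 = k})"
    by (rule card_lt_sum)
  also have "\<dots> = (\<Sum>k<Suc n. M k)"
    by (rule sum.cong) (auto simp: M_def)
  finally have "(\<Sum>k<Suc n. M k) = card {t. t < n \<and> s ! t - 1 < Suc n}" by simp
  also have "{t. t < n \<and> s ! t - 1 < Suc n} = {..<n}" using ent by fastforce
  finally show ?thesis by simp
qed

lemma Q_Suc: "Q (Suc j) = Q j + int (M j) - 1"
  by (simp add: Q_def)

lemma M_per: "M (k + Suc n) = M k" unfolding M_def by (metis mod_add_self2)

lemma E3: "Q (i + Suc n) = Q i - 1"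
proof (induction i)
  case 0 then show ?case using E2 by (simp add: Q_def)
next
  case (Suc i)
  have "Q (Suc i + Suc n) = Q (Suc (i + Suc n))" by simp
  also have "\<dots> = Q (i + Suc n) + int (M (i + Suc n)) - 1" by (rule Q_Suc)
  also have "\<dots> = Q (Suc i) - 1" using Suc M_per Q_Suc by simp
  finally show ?case .
qed

lemma E4:
  assumes c: "c < Suc n"
  shows "sh (Suc n) c s \<in> parking_functions n \<longleftrightarrow>
    (\<forall>i. 1 \<le> i \<and> i < Suc n \<longrightarrow> Q ((Suc n - c) mod Suc n) \<le> Q ((Suc n - c) mod Suc n + i))"
proof -
  let ?r = "(Suc n - c) mod Suc n"
  have "sh (Suc n) c s \<in> parking_functions n \<longleftrightarrow> (\<forall>i\<in>{1..n}. i \<le> card {t. t < n \<and> sh (Suc n) c s ! t \<le> i})"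
    by (rule PF_char) (use set_sh[of "Suc n" c s] len in auto)
  also have "\<dots> \<longleftrightarrow> (\<forall>i\<in>{1..n}. i \<le> (\<Sum>k<i. M (k + ?r)))"
    by (intro ball_cong refl) (simp add: E1[OF c])
  also have "\<dots> \<longleftrightarrow> (\<forall>i. 1 \<le> i \<and> i < Suc n \<longrightarrow> Q ?r \<le> Q (?r + i))"
  proof -
    have key: "(i \<le> (\<Sum>k<i. M (k + ?r))) \<longleftrightarrow> Q ?r \<le> Q (?r + i)" for i
    proof -
      have "Q (?r + i) - Q ?r = int (\<Sum>k<i. M (k + ?r)) - int i"
        by (simp add: Q_def sum_split_shift)
      then show ?thesis by linarith
    qed
    show ?thesis by (simp add: key) (auto)
  qed
  finally show ?thesis .
qed

lemma E5: "\<exists>!c. c < Suc n \<and> sh (Suc n) c s \<in> parking_functions n"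
proof -
  have "\<exists>!r. r < Suc n \<and> (\<forall>i. 1 \<le> i \<and> i < Suc n \<longrightarrow> Q r \<le> Q (r+i))"
    by (rule cycle, simp, rule E3)
  then obtain r where r: "r < Suc n" "\<forall>i. 1 \<le> i \<and> i < Suc n \<longrightarrow> Q r \<le> Q (r+i)"
    and ru: "\<And>r'. r' < Suc n \<Longrightarrow> (\<forall>i. 1 \<le> i \<and> i < Suc n \<longrightarrow> Q r' \<le> Q (r'+i)) \<Longrightarrow> r' = r"
    by blast
  show ?thesis
  proof (rule ex1I[of _ "(Suc n - r) mod Suc n"])
    have "(Suc n - (Suc n - r) mod Suc n) mod Suc n = r" by (rule neg_mod_inv[OF r(1)])
    then show "(Suc n - r) mod Suc n < Suc n \<and> sh (Suc n) ((Suc n - r) mod Suc n) s \<in> parking_functions n"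
      using E4[of "(Suc n - r) mod Suc n"] r by simp
  next
    fix c assume c: "c < Suc n \<and> sh (Suc n) c s \<in> parking_functions n"
    then have "(Suc n - c) mod Suc n = r" using E4[of c] ru[of "(Suc n - c) mod Suc n"] by simp
    then show "c = (Suc n - r) mod Suc n" using neg_mod_inv[of c "Suc n"] c by simp
  qed
qed

end



lemma PF_sub: "p \<in> parking_functions n \<Longrightarrow> length p = n \<and> set p \<subseteq> {1..Suc n}"
proof -
  assume p: "p \<in> parking_functions n"
  then have l: "length p = n" and e: "\<forall>t<n. 1 \<le> p ! t \<and> p ! t \<le> n" by (auto simp: parking_functions_def)
  have "set p \<subseteq> {1..Suc n}"
  proof
    fix x assume "x \<in> set p"
    then obtain t where "t < n" "x = p ! t" using l by (auto simp: in_set_conv_nth)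
    then show "x \<in> {1..Suc n}" using e by force
  qed
  then show ?thesis using l by simp
qed

lemma orbit_count:
  assumes inv: "\<And>s c. length s = n \<Longrightarrow> set s \<subseteq> {1..Suc n} \<Longrightarrow> P (sh (Suc n) c s) = P s"
  shows "card {s. length s = n \<and> set s \<subseteq> {1..Suc n} \<and> P s} = Suc n * card {p \<in> parking_functions n. P p}"
proof -
  let ?N = "Suc n"
  let ?A = "{s. length s = n \<and> set s \<subseteq> {1..Suc n} \<and> P s}"
  let ?B = "{p \<in> parking_functions n. P p}"
  have bij: "bij_betw (\<lambda>(c,p). sh ?N c p) ({..<?N} \<times> ?B) ?A"
  proof (rule bij_betw_imageI)
    show "inj_on (\<lambda>(c,p). sh ?N c p) ({..<?N} \<times> ?B)"
    proof (rule inj_onI, clarify)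
      fix c p c' p'
      assume c: "c < ?N" and p: "p \<in> parking_functions n" "P p" and c': "c' < ?N"
        and p': "p' \<in> parking_functions n" "P p'" and eq: "sh ?N c p = sh ?N c' p'"
      have pa: "length p = n" "set p \<subseteq> {1..?N}" using PF_sub[OF p(1)] by auto
      have pa': "length p' = n" "set p' \<subseteq> {1..?N}" using PF_sub[OF p'(1)] by auto
      interpret S: seq n p' using pa' by unfold_locales
      define d where "d = (c' + (?N - c)) mod ?N"
      have "sh ?N (?N - c) (sh ?N c p) = p" using sh_sh sh_N[OF pa(2)] c by simp
      moreover have "sh ?N (?N - c) (sh ?N c' p') = sh ?N d p'"
        unfolding d_def sh_mod sh_sh by simp
      ultimately have pd: "p = sh ?N d p'" using eq by simp
      have "d < ?N" unfolding d_def by simp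
      then have "d = 0" using S.E5 pd p(1) p'(1) sh_0[OF pa'(2)] by (metis zero_less_Suc)
      have "c = c'"
      proof (cases "c \<le> c'")
        case True
        then have "c' + (?N - c) = (c' - c) + ?N" using c by simp
        then have "d = (c' - c) mod ?N" unfolding d_def by (metis mod_add_self2)
        then have "d = c' - c" using c' by simp
        then show ?thesis using True \<open>d = 0\<close> by simp
      next
        case False
        then have "c' + (?N - c) < ?N" "c' + (?N - c) > 0" using c by auto
        then have "d = c' + (?N - c)" unfolding d_def by simp
        then show ?thesis using \<open>d = 0\<close> \<open>c' + (?N - c) > 0\<close> by simp
      qed
      moreover have "p = p'" using pd \<open>d = 0\<close> sh_0[OF pa'(2)] by simp
      ultimately show "c = c' \<and> p = p'" by simp
    qed
    show "(\<lambda>(c,p). sh ?N c p) ` ({..<?N} \<times> ?B) = ?A"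
    proof (rule set_eqI, rule iffI)
      fix s assume "s \<in> (\<lambda>(c,p). sh ?N c p) ` ({..<?N} \<times> ?B)"
      then obtain c p where s: "s = sh ?N c p" "p \<in> parking_functions n" "P p" by auto
      have pa: "length p = n" "set p \<subseteq> {1..?N}" using PF_sub[OF s(2)] by auto
      show "s \<in> ?A" using s pa set_sh[of ?N c p] inv[OF pa] by auto
    next
      fix s assume s: "s \<in> ?A"
      then have sa: "length s = n" "set s \<subseteq> {1..?N}" "P s" by auto
      interpret S: seq n s using sa by unfold_locales
      obtain c where c: "c < ?N" "sh ?N c s \<in> parking_functions n" using S.E5 by blast
      have "sh ?N ((?N - c) mod ?N) (sh ?N c s) = sh ?N ((c + (?N - c) mod ?N) mod ?N) s"
        by (simp only: sh_sh sh_mod)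
      also have "(c + (?N - c) mod ?N) mod ?N = 0" using c by (simp add: mod_add_right_eq)
      finally have "s = sh ?N ((?N - c) mod ?N) (sh ?N c s)" using sh_0[OF sa(2)] by simp
      moreover have "P (sh ?N c s)" using inv[OF sa(1,2)] sa(3) by simp
      ultimately show "s \<in> (\<lambda>(c,p). sh ?N c p) ` ({..<?N} \<times> ?B)"
        using c by (intro image_eqI[of _ _ "((?N - c) mod ?N, sh ?N c s)"]) auto
    qed
  qed
  have "card ?A = card ({..<?N} \<times> ?B)" using bij_betw_same_card[OF bij] by simp
  then show ?thesis by (simp add: card_cartesian_product)
qed

lemma count_j:
  assumes "n \<ge> 1"
  shows "Suc n * card {p \<in> parking_functions n. repeats p = j} = Suc n * ((n - 1) choose j) * n ^ (n - 1 - j)"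
proof -
  have "Suc n * card {p \<in> parking_functions n. repeats p = j} = card {s. length s = n \<and> set s \<subseteq> {1..Suc n} \<and> repeats s = j}"
    by (rule orbit_count[symmetric]) (simp add: repeats_sh)
  also have "\<dots> = card {1..Suc n} * ((n - 1) choose j) * (card {1..Suc n} - 1) ^ (n - 1 - j)"
    by (rule card_lists_rep) (use assms in auto)
  finally show ?thesis by simp
qed

lemma count_all:
  shows "Suc n * card (parking_functions n) = Suc n ^ n"
proof -
  have "Suc n * card {p \<in> parking_functions n. True} = card {s. length s = n \<and> set s \<subseteq> {1..Suc n} \<and> True}"
    by (rule orbit_count[symmetric]) simp
  also have "{s. length s = n \<and> set s \<subseteq> {1..Suc n} \<and> True} = {xs. set xs \<subseteq> {1..Suc n} \<and> length xs = n}" by auto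
  finally show ?thesis by (simp add: card_lists_length_eq)
qed

lemma prob_eq:
  assumes "n \<ge> 1"
  shows "real (card {p \<in> parking_functions n. repeats p = j}) / real (card (parking_functions n))
     = real ((n - 1) choose j) * real n ^ (n - 1 - j) / real (Suc n) ^ (n - 1)"
proof -
  have "Suc n * card {p \<in> parking_functions n. repeats p = j} = Suc n * (((n - 1) choose j) * n ^ (n - 1 - j))"
    using count_j[OF assms, of j] by (simp only: mult.assoc)
  then have a: "card {p \<in> parking_functions n. repeats p = j} = ((n - 1) choose j) * n ^ (n - 1 - j)"
    by (simp only: mult_cancel_left) simp
  have b: "card (parking_functions n) = Suc n ^ (n - 1)"
  proof -
    have "Suc n * card (parking_functions n) = Suc n * Suc n ^ (n - 1)"
    proof -
      have "Suc n ^ n = Suc n * Suc n ^ (n - 1)" using assms by (cases n) auto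
      then show ?thesis using count_all[of n] by simp
    qed
    then show ?thesis by (simp only: mult_cancel_left) simp
  qed
  show ?thesis unfolding a b by simp
qed



lemma L1: "(\<lambda>m. real (m choose j) / real (Suc m) ^ j) \<longlonglongrightarrow> 1 / fact j"
proof -
  have eq: "real (m choose j) / real (Suc m) ^ j = (\<Prod>i=0..<j. (real m - real i) / (real m + 1)) / fact j" for m
  proof -
    have "real (m choose j) = (\<Prod>i=0..<j. real m - real i) / fact j"
      by (simp add: binomial_gbinomial gbinomial_prod_rev)
    moreover have "real (Suc m) ^ j = (\<Prod>i=0..<j. real m + 1)" by (simp add: add.commute)
    ultimately show ?thesis by (simp add: prod_dividef)
  qed
  have "(\<lambda>m. (\<Prod>i=0..<j. (real m - real i) / (real m + 1))) \<longlonglongrightarrow> (\<Prod>i=0..<j. 1::real)"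
  proof (rule tendsto_prod)
    fix i show "(\<lambda>m. (real m - real i) / (real m + 1)) \<longlonglongrightarrow> 1" by real_asymp
  qed
  then have "(\<lambda>m. (\<Prod>i=0..<j. (real m - real i) / (real m + 1)) / fact j) \<longlonglongrightarrow> 1 / fact j"
    by (intro tendsto_divide) auto
  then show ?thesis by (simp only: eq)
qed

lemma L2: "(\<lambda>m::nat. ((real m + 1) / (real m + 2)) ^ m) \<longlonglongrightarrow> exp (-1)"
  by real_asymp

lemma eqm:
  assumes "j \<le> m"
  shows "real (card {p \<in> parking_functions (Suc m). repeats p = j}) / real (card (parking_functions (Suc m)))
     = real (m choose j) / real (Suc m) ^ j * ((real m + 1) / (real m + 2)) ^ m"
proof -
  have "real (Suc m) ^ m = real (Suc m) ^ j * real (Suc m) ^ (m - j)"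
    using assms by (simp flip: power_add)
  then show ?thesis using prob_eq[of "Suc m" j]
    by (simp add: power_divide field_simps)
qed

theorem mainTheorem10:
  fixes j :: nat
  shows "(\<lambda>n. real (card {p \<in> parking_functions n. repeats p = j}) / real (card (parking_functions n)))
           \<longlonglongrightarrow> 1 / (exp 1 * fact j)"
proof -
  have "(\<lambda>m. real (m choose j) / real (Suc m) ^ j * ((real m + 1) / (real m + 2)) ^ m) \<longlonglongrightarrow> 1 / fact j * exp (-1)"
    by (intro tendsto_mult L1 L2)
  moreover have "1 / fact j * exp (-1) = 1 / (exp 1 * (fact j :: real))" by (simp add: exp_minus divide_inverse mult.commute)
  ultimately have "(\<lambda>m. real (m choose j) / real (Suc m) ^ j * ((real m + 1) / (real m + 2)) ^ m) \<longlonglongrightarrow> 1 / (exp 1 * fact j)"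
    by simp
  then have "(\<lambda>m. real (card {p \<in> parking_functions (Suc m). repeats p = j}) / real (card (parking_functions (Suc m))))
      \<longlonglongrightarrow> 1 / (exp 1 * fact j)"
  proof (rule Lim_transform_eventually)
    show "\<forall>\<^sub>F m in sequentially. real (m choose j) / real (Suc m) ^ j * ((real m + 1) / (real m + 2)) ^ m =
       real (card {p \<in> parking_functions (Suc m). repeats p = j}) / real (card (parking_functions (Suc m)))"
      using eventually_ge_at_top[of j] by eventually_elim (simp add: eqm)
  qed
  then show ?thesis by (rule LIMSEQ_imp_Suc)
qed


end
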